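(* Under the assumptions of the preceding setting (channel $y=hx+v$, $v\sim\mathcal{CN}(0,1)$, perfect CSI at transmitter and receiver, $|h|^2$ with continuous density $f$, finite mean, and strictly increasing CDF $F$ on its support; fixed $A>1$), consider the On-Off power allocation $$P(h)=\begin{cases}A\,\mathrm{SNR}, & |h|^2\ge F^{-1}(1-\frac1A),\\ 0,&\text{otherwise},\end{cases}$$ which satisfies $\mathbf{E}[P(h)]\le\mathrm{SNR}$ and $P(h)\le A\,\mathrm{SNR}$. Its rate $$R(\mathrm{SNR})=\int_{F^{-1}(1-\frac1A)}^\infty \log(1+A\,\mathrm{SNR}\,t)\,f(t)\,dt$$ satisfies $\lim_{\mathrm{SNR}\to0}R(\mathrm{SNR})/C(\mathrm{SNR})=1$, where $C(\mathrm{SNR})$ is the capacity under average power constraint $\mathrm{SNR}$ and peak power constraint $A\,\mathrm{SNR}$.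
   Context: $C(\mathrm{SNR})=\sup\mathbf{E}[\log(1+P(h)|h|^2)]$ over measurable $P(h)\ge 0$ with $\mathbf{E}[P(h)]\le\mathrm{SNR}$ and $\max_hP(h)\le A\,\mathrm{SNR}$. Logarithms are natural. *)

theory Defs
  imports "HOL-Analysis.Analysis"
begin

text \<open>Channel gain g = |h|^2 has density f w.r.t. Lebesgue measure on the reals.\<close>

definition gain_cdf :: "(real \<Rightarrow> real) \<Rightarrow> real \<Rightarrow> real" where
  "gain_cdf f x = (LINT t:{..x}|lborel. f t)"

text \<open>Inverse CDF F^{-1}(p): the (unique, under strict monotonicity) point with F t = p.\<close>
definition gain_cdf_inv :: "(real \<Rightarrow> real) \<Rightarrow> real \<Rightarrow> real" where
  "gain_cdf_inv f p = (THE t. gain_cdf f t = p)"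

text \<open>Ergodic rate E[log(1 + P(g) g)] of a power allocation P (as a function of g = |h|^2).\<close>
definition rate :: "(real \<Rightarrow> real) \<Rightarrow> (real \<Rightarrow> real) \<Rightarrow> real" where
  "rate f P = (LINT t|lborel. f t * ln (1 + P t * t))"

definition admissible :: "(real \<Rightarrow> real) \<Rightarrow> real \<Rightarrow> real \<Rightarrow> (real \<Rightarrow> real) \<Rightarrow> bool" where
  "admissible f A snr P \<longleftrightarrow> P \<in> borel_measurable lborel \<and> (\<forall>t. 0 \<le> P t \<and> P t \<le> A * snr)
     \<and> (LINT t|lborel. f t * P t) \<le> snr"

definition capacity :: "(real \<Rightarrow> real) \<Rightarrow> real \<Rightarrow> real \<Rightarrow> real" where
  "capacity f A snr = Sup (rate f ` {P. admissible f A snr P})"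

definition onoff_rate :: "(real \<Rightarrow> real) \<Rightarrow> real \<Rightarrow> real \<Rightarrow> real" where
  "onoff_rate f A snr = (LINT t:{gain_cdf_inv f (1 - 1/A)..}|lborel. ln (1 + A * snr * t) * f t)"

end

theory Submission
  imports Defs "HOL-Probability.Probability" "HOL-Real_Asymp.Real_Asymp" begin

lemma dens_measure:
  fixes f :: "real \<Rightarrow> real"
  assumes nn: "\<And>t. 0 \<le> f t" and fi: "integrable lborel f" and S: "S \<in> sets borel"
  shows "measure (density lborel f) S = (LINT t:S|lborel. f t)"
proof -
  have fm: "f \<in> borel_measurable borel" using fi by (simp add: borel_measurable_integrable)
  have ii: "integrable lborel (\<lambda>t. indicator S t * f t)"
    using integrable_mult_indicator[OF _ fi, of S] S by simp
  have "emeasure (density lborel f) S = (\<integral>\<^sup>+ t. ennreal (indicator S t * f t) \<partial>lborel)"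
    using S fm by (simp add: emeasure_density nn_integral_set_ennreal mult.commute)
  also have "\<dots> = ennreal (LINT t|lborel. indicator S t * f t)"
    using ii nn by (intro nn_integral_eq_integral) auto
  finally show ?thesis
    using nn S by (simp add: measure_def set_lebesgue_integral_def integral_nonneg)
qed

locale setting =
  fixes f :: "real \<Rightarrow> real" and A :: real
  assumes A: "A > 1"
    and f_nonneg: "\<And>t. 0 \<le> f t"
    and f_neg: "\<And>t. t < 0 \<Longrightarrow> f t = 0"
    and f_cont: "continuous_on {0..} f"
    and f_int: "integrable lborel f"
    and f_one: "(LINT t|lborel. f t) = 1"
    and f_mean: "integrable lborel (\<lambda>t. t * f t)"
    and F_strict: "strict_mono_on {t. 0 < gain_cdf f t \<and> gain_cdf f t < 1} (gain_cdf f)"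
begin

definition "M = density lborel f"

lemma fm[measurable]: "f \<in> borel_measurable borel"
  using f_int by (simp add: borel_measurable_integrable)

lemma M_meas: "S \<in> sets borel \<Longrightarrow> measure M S = (LINT t:S|lborel. f t)"
  unfolding M_def by (rule dens_measure[OF f_nonneg f_int])

lemma sets_M: "sets M = sets borel"
  by (simp add: M_def)

lemma real_dist: "real_distribution M"
proof -
  have "measure M UNIV = 1" using M_meas[of UNIV] f_one by (simp add: set_lebesgue_integral_def)
  moreover have "emeasure M UNIV \<noteq> \<infinity>"
    unfolding M_def using f_nonneg f_int
    by (simp add: emeasure_density nn_integral_eq_integral)
  ultimately have "emeasure M UNIV = 1"
    by (simp add: emeasure_eq_ennreal_measure)
  then have "prob_space M"
    by (intro prob_spaceI) (simp add: M_def)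
  then show ?thesis
    by (simp add: real_distribution_def real_distribution_axioms_def sets_M)
qed

interpretation D: real_distribution M by (rule real_dist)

lemma F_eq: "gain_cdf f x = cdf M x"
  by (simp add: gain_cdf_def cdf_def M_meas)

lemma point0: "measure M {x} = 0"
proof -
  have "(LINT t:{x}|lborel. f t) = 0"
    unfolding set_lebesgue_integral_def
    by (rule integral_eq_zero_AE) (use AE_lborel_singleton[of x] in eventually_elim, simp)
  then show ?thesis by (simp add: M_meas)
qed

lemma F_cont: "continuous_on S (gain_cdf f)"
  unfolding F_eq[abs_def] using D.isCont_cdf point0
  by (intro continuous_at_imp_continuous_on) auto

definition "p = 1 - 1/A"
definition "t0 = gain_cdf_inv f p"

lemma p: "0 < p" "p < 1" using A by (auto simp: p_def)

lemma F0: "gain_cdf f 0 = 0"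
proof -
  have "(LINT t:{..0}|lborel. f t) = 0"
    unfolding set_lebesgue_integral_def
    by (rule integral_eq_zero_AE) (use AE_lborel_singleton[of 0] in eventually_elim, auto simp: f_neg indicator_def)
  then show ?thesis by (simp add: gain_cdf_def)
qed

lemma t0: "gain_cdf f t0 = p"
proof -
  have "\<forall>\<^sub>F x in at_bot. cdf M x < p" using D.cdf_lim_at_bot p(1) by (rule order_tendstoD)
  then obtain a where a: "cdf M a < p" by (auto simp: eventually_at_bot_linorder)
  have "\<forall>\<^sub>F x in at_top. cdf M x > p" using D.cdf_lim_at_top_prob p(2) by (rule order_tendstoD)
  then obtain b where b: "cdf M b > p" "b \<ge> a"
    by (auto simp: eventually_at_top_linorder) (metis max.cobounded1 max.cobounded2)
  obtain x where x: "gain_cdf f x = p"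
    using IVT'[of "gain_cdf f" a p b] a b F_cont by (auto simp: F_eq less_imp_le)
  have uniq: "y = x" if "gain_cdf f y = p" for y
  proof (rule ccontr)
    assume "y \<noteq> x"
    then have d: "y < x \<or> x < y" by auto
    have i1: "y \<in> {t. 0 < gain_cdf f t \<and> gain_cdf f t < 1}" and i2: "x \<in> {t. 0 < gain_cdf f t \<and> gain_cdf f t < 1}"
      using p x that by auto
    note sm = strict_mono_onD[OF F_strict]
    from d show False
    proof
      assume "y < x"
      from sm[OF i1 i2 this] show False using x that by simp
    next
      assume "x < y"
      from sm[OF i2 i1 this] show False using x that by simp
    qed
  qed
  have "gain_cdf_inv f p = x"
    unfolding gain_cdf_inv_def using x uniq by (intro the_equality) 
  then show ?thesis using x by (simp add: t0_def)
qed

lemma t0_pos: "t0 > 0"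
proof (rule ccontr)
  assume "\<not> t0 > 0"
  then have "gain_cdf f t0 \<le> gain_cdf f 0" by (simp add: F_eq D.cdf_nondecreasing)
  then show False using t0 F0 p by simp
qed

lemma tail: "(LINT t:{t0..}|lborel. f t) = 1/A"
proof -
  have "measure M {t0..} = measure M (UNIV - ({..t0} - {t0}))"
    by (rule arg_cong[where f="measure M"]) auto
  also have "\<dots> = 1 - measure M ({..t0} - {t0})"
    using D.prob_compl[of "{..t0} - {t0}"] sets_M by simp
  also have "measure M ({..t0} - {t0}) = measure M {..t0} - measure M {t0}"
    by (rule D.finite_measure_Diff) (auto simp: sets_M)
  also have "measure M {..t0} = p" using t0 by (simp add: F_eq cdf_def)
  finally show ?thesis using point0 by (simp add: M_meas p_def)
qed

definition "Q s = (\<lambda>t. A * s * indicator {t0..} t)"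

lemma onoff_eq: "onoff_rate f A s = rate f (Q s)"
  unfolding onoff_rate_def rate_def Q_def set_lebesgue_integral_def t0_def[symmetric] p_def[symmetric]
  by (rule Bochner_Integration.integral_cong) (auto simp: indicator_def)

lemma Q_adm: assumes s: "s > 0" shows "admissible f A s (Q s)"
proof -
  have "(LINT t|lborel. f t * Q s t) = A * s * (LINT t:{t0..}|lborel. f t)"
    unfolding Q_def set_lebesgue_integral_def
    by (simp add: mult.commute mult.left_commute flip: integral_mult_right_zero)
  also have "\<dots> = s" using tail A by simp
  finally show ?thesis
    unfolding admissible_def using A s by (auto simp: Q_def indicator_def)
qed

definition "Mm = (LINT t:{t0..}|lborel. t * f t)"

lemma int_ind_tf: "integrable lborel (\<lambda>t. indicator {t0..} t * (t * f t))"
  using integrable_mult_indicator[OF _ f_mean, of "{t0..}"] by simp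

lemma int_ind_f: "integrable lborel (\<lambda>t. indicator {t0..} t * f t)"
  using integrable_mult_indicator[OF _ f_int, of "{t0..}"] by simp

lemma Mm_pos: "Mm > 0"
proof -
  have "t0 / A = (LINT t|lborel. t0 * (indicator {t0..} t * f t))"
    using tail by (simp add: set_lebesgue_integral_def)
  also have "\<dots> \<le> (LINT t|lborel. indicator {t0..} t * (t * f t))"
    using int_ind_tf int_ind_f f_nonneg
    by (intro integral_mono) (auto simp: indicator_def mult_right_mono)
  moreover have "t0 / A > 0" using t0_pos A by simp
  ultimately show ?thesis by (simp add: Mm_def set_lebesgue_integral_def)
qed

lemma rate_le: assumes s: "s > 0" and adm: "admissible f A s P"
  shows "rate f P \<le> A * s * Mm"
proof -
  have Pm[measurable]: "P \<in> borel_measurable borel" and P0: "\<And>t. 0 \<le> P t" and P1: "\<And>t. P t \<le> A * s"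
    and EP: "(LINT t|lborel. f t * P t) \<le> s"
    using adm by (auto simp: admissible_def)
  have i1: "integrable lborel (\<lambda>t. f t * ln (1 + P t * t))"
  proof (rule Bochner_Integration.integrable_bound)
    show "integrable lborel (\<lambda>t. A * s * (t * f t))" using f_mean by simp
    show "(\<lambda>t. f t * ln (1 + P t * t)) \<in> borel_measurable lborel" by measurable
    show "AE t in lborel. norm (f t * ln (1 + P t * t)) \<le> norm (A * s * (t * f t))"
    proof (rule AE_I2)
      fix t show "norm (f t * ln (1 + P t * t)) \<le> norm (A * s * (t * f t))"
      proof (cases "t < 0")
        case True then show ?thesis by (simp add: f_neg)
      next
        case False
        then have pt: "0 \<le> P t * t" using P0 by simp
        have "ln (1 + P t * t) \<le> P t * t" using ln_le_minus_one[of "1 + P t * t"] pt by simp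
        also have "\<dots> \<le> A * s * t" using P1 False by (simp add: mult_right_mono)
        finally have "\<bar>ln (1 + P t * t)\<bar> \<le> A * s * t" using pt by simp
        then have "\<bar>f t\<bar> * \<bar>ln (1 + P t * t)\<bar> \<le> \<bar>f t\<bar> * (A * s * t)"
          by (intro mult_left_mono) auto
        then show ?thesis using False f_nonneg[of t] A s
          by (simp add: abs_mult mult_ac)
      qed
    qed
  qed
  have i2: "integrable lborel (\<lambda>t. f t * P t * t)"
  proof (rule Bochner_Integration.integrable_bound)
    show "integrable lborel (\<lambda>t. A * s * (t * f t))" using f_mean by simp
    show "(\<lambda>t. f t * P t * t) \<in> borel_measurable lborel" by measurable
    show "AE t in lborel. norm (f t * P t * t) \<le> norm (A * s * (t * f t))"
    proof (rule AE_I2)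
      fix t
      have "\<bar>P t\<bar> \<le> \<bar>A * s\<bar>" using P0[of t] P1[of t] by simp
      then have "\<bar>P t\<bar> * (\<bar>f t\<bar> * \<bar>t\<bar>) \<le> \<bar>A * s\<bar> * (\<bar>f t\<bar> * \<bar>t\<bar>)"
        by (intro mult_right_mono) auto
      then show "norm (f t * P t * t) \<le> norm (A * s * (t * f t))"
        by (simp add: abs_mult mult_ac)
    qed
  qed
  have i3: "integrable lborel (\<lambda>t. f t * P t)"
  proof (rule Bochner_Integration.integrable_bound)
    show "integrable lborel (\<lambda>t. A * s * f t)" using f_int by simp
    show "(\<lambda>t. f t * P t) \<in> borel_measurable lborel" by measurable
    show "AE t in lborel. norm (f t * P t) \<le> norm (A * s * f t)"
    proof (rule AE_I2)
      fix t
      have "\<bar>P t\<bar> \<le> \<bar>A * s\<bar>" using P0[of t] P1[of t] by simp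
      then have "\<bar>P t\<bar> * \<bar>f t\<bar> \<le> \<bar>A * s\<bar> * \<bar>f t\<bar>"
        by (intro mult_right_mono) auto
      then show "norm (f t * P t) \<le> norm (A * s * f t)"
        by (simp add: abs_mult mult_ac)
    qed
  qed
  have "rate f P \<le> (LINT t|lborel. f t * P t * t)"
    unfolding rate_def
  proof (rule integral_mono[OF i1 i2])
    fix t show "f t * ln (1 + P t * t) \<le> f t * P t * t"
    proof (cases "t < 0")
      case True then show ?thesis by (simp add: f_neg)
    next
      case False
      then have pt: "0 \<le> P t * t" using P0 by simp
      have "ln (1 + P t * t) \<le> P t * t" using ln_le_minus_one[of "1 + P t * t"] pt by simp
      then show ?thesis using f_nonneg[of t] by (simp add: mult_left_mono mult.assoc)
    qed
  qed
  also have "\<dots> \<le> (LINT t|lborel. A * s * (indicator {t0..} t * (t * f t))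
       + t0 * (f t * P t - A * s * (indicator {t0..} t * f t)))"
  proof (rule integral_mono[OF i2])
    show "integrable lborel (\<lambda>t. A * s * (indicator {t0..} t * (t * f t))
       + t0 * (f t * P t - A * s * (indicator {t0..} t * f t)))"
      using int_ind_tf int_ind_f i3 by auto
    fix t
    have key: "f t * (P t - A * s * indicator {t0..} t) * (t - t0) \<le> 0"
    proof (cases "t0 \<le> t")
      case True
      have "f t * (P t - A * s) \<le> 0" using f_nonneg[of t] P1[of t] by (simp add: mult_nonneg_nonpos)
      then show ?thesis using True by (simp add: mult_nonpos_nonneg)
    next
      case False
      have "0 \<le> f t * P t" using f_nonneg[of t] P0[of t] by simp
      then show ?thesis using False by (simp add: mult_nonneg_nonpos)
    qed
    then show "f t * P t * t \<le> A * s * (indicator {t0..} t * (t * f t))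
       + t0 * (f t * P t - A * s * (indicator {t0..} t * f t))"
      by (simp add: algebra_simps)
  qed
  also have "\<dots> = A * s * Mm + t0 * ((LINT t|lborel. f t * P t) - A * s * (1/A))"
    using int_ind_tf int_ind_f i3 tail
    by (simp add: Mm_def set_lebesgue_integral_def)
  also have "\<dots> \<le> A * s * Mm"
    using EP t0_pos A by (simp add: mult_nonneg_nonpos)
  finally show ?thesis .
qed

lemma cap_bounds: assumes s: "s > 0"
  shows "onoff_rate f A s \<le> capacity f A s" "capacity f A s \<le> A * s * Mm"
proof -
  have ne: "rate f ` {P. admissible f A s P} \<noteq> {}" using Q_adm[OF s] by auto
  have bdd: "bdd_above (rate f ` {P. admissible f A s P})"
    using rate_le[OF s] by (auto intro!: bdd_aboveI)
  show "onoff_rate f A s \<le> capacity f A s"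
    unfolding capacity_def onoff_eq using Q_adm[OF s] bdd by (intro cSup_upper) auto
  show "capacity f A s \<le> A * s * Mm"
    unfolding capacity_def using ne rate_le[OF s] by (intro cSup_least) auto
qed

lemma pw_lim: assumes t: "t > 0" shows "((\<lambda>s. ln (1 + A * s * t) / (A * s)) \<longlongrightarrow> t) (at_right 0)"
  using A t by real_asymp

lemma lim_L: "((\<lambda>s. onoff_rate f A s / (A * s)) \<longlongrightarrow> Mm) (at_right 0)"
proof -
  define g where "g s t = indicator {t0..} t * (ln (1 + A * s * t) / (A * s) * f t)" for s t
  have eq: "onoff_rate f A s / (A * s) = (LINT t|lborel. g s t)" for s
    unfolding onoff_rate_def set_lebesgue_integral_def t0_def[symmetric] p_def[symmetric] g_def
    by (simp flip: integral_divide_zero add: field_simps)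
  have "((\<lambda>x. LINT t|lborel. g (inverse x) t) \<longlongrightarrow> (LINT t|lborel. indicator {t0..} t * (t * f t))) at_top"
  proof (rule integral_dominated_convergence_at_top[where w="\<lambda>t. indicator {t0..} t * (t * f t)"])
    show "(\<lambda>t. indicator {t0..} t * (t * f t)) \<in> borel_measurable lborel" by measurable
    show "\<And>x. g (inverse x) \<in> borel_measurable lborel" unfolding g_def by measurable
    show "integrable lborel (\<lambda>t. indicator {t0..} t * (t * f t))" by (rule int_ind_tf)
    show "AE t in lborel. ((\<lambda>x. g (inverse x) t) \<longlongrightarrow> indicator {t0..} t * (t * f t)) at_top"
    proof (rule AE_I2)
      fix t
      show "((\<lambda>x. g (inverse x) t) \<longlongrightarrow> indicator {t0..} t * (t * f t)) at_top"
      proof (cases "t0 \<le> t")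
        case False then show ?thesis by (simp add: g_def)
      next
        case True
        then have "t > 0" using t0_pos by simp
        from pw_lim[OF this] have "((\<lambda>s. ln (1 + A * s * t) / (A * s) * f t) \<longlongrightarrow> t * f t) (at_right 0)"
          by (intro tendsto_mult) auto
        then have "((\<lambda>x. ln (1 + A * inverse x * t) / (A * inverse x) * f t) \<longlongrightarrow> t * f t) at_top"
          unfolding filterlim_at_top_to_right by simp
        then show ?thesis using True by (simp add: g_def)
      qed
    qed
    show "\<forall>\<^sub>F x in at_top. AE t in lborel. norm (g (inverse x) t) \<le> indicator {t0..} t * (t * f t)"
    proof (rule eventually_mono[OF eventually_gt_at_top[of 0]], rule AE_I2)
      fix x t :: real assume x: "0 < x"
      define s where "s = inverse x"
      have s: "s > 0" using x by (simp add: s_def)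
      show "norm (g (inverse x) t) \<le> indicator {t0..} t * (t * f t)"
      proof (cases "t0 \<le> t")
        case False then show ?thesis by (simp add: g_def)
      next
        case True
        then have t: "t > 0" using t0_pos by simp
        have as: "A * s > 0" using A s by simp
        have l0: "0 \<le> ln (1 + A * s * t)" using as t by simp
        have ast: "0 < A * s * t" using as t by simp
        have "ln (1 + A * s * t) \<le> A * s * t" using ln_le_minus_one[of "1 + A * s * t"] ast by simp
        then have "ln (1 + A * s * t) / (A * s) \<le> t" using as by (simp add: divide_le_eq mult.commute)
        then have "ln (1 + A * s * t) / (A * s) * f t \<le> t * f t" using f_nonneg[of t] by (rule mult_right_mono)
        moreover have "0 \<le> ln (1 + A * s * t) / (A * s) * f t" using l0 as f_nonneg[of t] by simp
        ultimately show ?thesis using True by (simp add: g_def s_def[symmetric])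
      qed
    qed
  qed
  then have "((\<lambda>s. LINT t|lborel. g s t) \<longlongrightarrow> Mm) (at_right 0)"
    unfolding filterlim_at_top_to_right Mm_def set_lebesgue_integral_def by simp
  then show ?thesis by (simp add: eq)
qed

lemma main: "((\<lambda>snr. onoff_rate f A snr / capacity f A snr) \<longlongrightarrow> 1) (at_right 0)"
proof (rule tendsto_sandwich)
  have L1: "((\<lambda>s. onoff_rate f A s / (A * s) / Mm) \<longlongrightarrow> Mm / Mm) (at_right 0)"
    using lim_L Mm_pos by (intro tendsto_divide) auto
  then show "((\<lambda>s. onoff_rate f A s / (A * s) / Mm) \<longlongrightarrow> 1) (at_right 0)" using Mm_pos by simp
  show "((\<lambda>s. 1) \<longlongrightarrow> 1) (at_right 0)" by simp
  have ev0: "\<forall>\<^sub>F s in at_right 0. (0::real) < s" by (simp add: eventually_at_right_less)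
  have evp: "\<forall>\<^sub>F s in at_right 0. 0 < onoff_rate f A s / (A * s)"
    using lim_L Mm_pos by (rule order_tendstoD)
  have evN: "\<forall>\<^sub>F s in at_right 0. 0 < onoff_rate f A s \<and> 0 < s"
    using evp ev0
  proof eventually_elim
    case (elim s)
    have "A * s > 0" using A elim by simp
    then show ?case using elim by (auto simp: zero_less_divide_iff)
  qed
  show "\<forall>\<^sub>F s in at_right 0. onoff_rate f A s / (A * s) / Mm \<le> onoff_rate f A s / capacity f A s"
    using evN
  proof eventually_elim
    case (elim s)
    have c1: "onoff_rate f A s \<le> capacity f A s" and c2: "capacity f A s \<le> A * s * Mm"
      using cap_bounds elim by auto
    have cpos: "0 < capacity f A s" using c1 elim by simp
    have "onoff_rate f A s / (A * s) / Mm = onoff_rate f A s / (A * s * Mm)" by simp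
    also have "\<dots> \<le> onoff_rate f A s / capacity f A s"
      using elim cpos c2 by (intro divide_left_mono) auto
    finally show ?case .
  qed
  show "\<forall>\<^sub>F s in at_right 0. onoff_rate f A s / capacity f A s \<le> 1"
    using evN
  proof eventually_elim
    case (elim s)
    have c1: "onoff_rate f A s \<le> capacity f A s" using cap_bounds elim by auto
    then show ?case using elim by (simp add: divide_le_eq)
  qed
qed

end

theorem corollary1:
  fixes f :: "real \<Rightarrow> real" and A :: real
  assumes A: "A > 1"
    and f_nonneg: "\<And>t. 0 \<le> f t"
    and f_neg: "\<And>t. t < 0 \<Longrightarrow> f t = 0"
    and f_cont: "continuous_on {0..} f"
    and f_int: "integrable lborel f"
    and f_one: "(LINT t|lborel. f t) = 1"
    and f_mean: "integrable lborel (\<lambda>t. t * f t)"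
    and F_strict: "strict_mono_on {t. 0 < gain_cdf f t \<and> gain_cdf f t < 1} (gain_cdf f)"
  shows "((\<lambda>snr. onoff_rate f A snr / capacity f A snr) \<longlongrightarrow> 1) (at_right 0)"
proof -
  interpret setting f A using assms by unfold_locales
  show ?thesis by (rule main)
qed

end
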